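(* Let $\mathbb{F}_q$ be a finite field. For any sets $\mathcal{A},\mathcal{B},\mathcal{C}\subseteq\mathbb{F}_q$ with $A=\#\mathcal{A}$ and any nontrivial additive character $\psi$ of $\mathbb{F}_q$, $$|S_\psi(\mathcal{A},\mathcal{B},\mathcal{C})|\le A^{1/2}\,\mathrm{E}(\mathcal{B})^{1/4}\,\mathrm{E}(\mathcal{C})^{1/4}\,q^{1/2}.$$
   Context: $S_\psi(\mathcal{A},\mathcal{B},\mathcal{C})=\sum_{a\in\mathcal{A}}\sum_{b\in\mathcal{B}}\sum_{c\in\mathcal{C}}\psi(ab+ac+bc)$. $\mathrm{E}(\mathcal{U})=\#\{(u_1,u_2,u_3,u_4)\in\mathcal{U}^4:u_1+u_2=u_3+u_4\}$. *)

theory Defs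
  imports Complex_Main
begin

definition additive_character :: "('a::{finite,field} \<Rightarrow> complex) \<Rightarrow> bool" where
  "additive_character \<psi> \<longleftrightarrow> (\<forall>x y. \<psi> (x + y) = \<psi> x * \<psi> y) \<and> (\<forall>x. norm (\<psi> x) = 1)"

definition nontrivial_character :: "('a::{finite,field} \<Rightarrow> complex) \<Rightarrow> bool" where
  "nontrivial_character \<psi> \<longleftrightarrow> (\<exists>x. \<psi> x \<noteq> 1)"

definition S_sum :: "('a::{finite,field} \<Rightarrow> complex) \<Rightarrow> 'a set \<Rightarrow> 'a set \<Rightarrow> 'a set \<Rightarrow> complex" where
  "S_sum \<psi> A B C = (\<Sum>a\<in>A. \<Sum>b\<in>B. \<Sum>c\<in>C. \<psi> (a*b + a*c + b*c))"

definition add_energy :: "'a::{finite,field} set \<Rightarrow> nat" where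
  "add_energy U = card {(u1,u2,u3,u4). u1 \<in> U \<and> u2 \<in> U \<and> u3 \<in> U \<and> u4 \<in> U \<and> u1 + u2 = u3 + u4}"

end

theory Submission
  imports Defs "HOL-Analysis.Convex"
begin

lemma char_0:
  assumes "additive_character \<psi>" shows "\<psi> 0 = 1"
proof -
  have "\<psi> 0 = \<psi> 0 * \<psi> 0" using assms unfolding additive_character_def by (metis add_0)
  moreover have "\<psi> 0 \<noteq> 0" using assms unfolding additive_character_def by (metis norm_zero zero_neq_one)
  ultimately show ?thesis by simp
qed

lemma char_neg:
  assumes "additive_character \<psi>" shows "\<psi> (- x) = cnj (\<psi> x)"
proof -
  have n: "norm (\<psi> x) = 1" using assms unfolding additive_character_def by blast
  have "\<psi> x * \<psi> (-x) = 1" using assms char_0[OF assms] unfolding additive_character_def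
    by (metis add.right_inverse)
  moreover have "\<psi> x * cnj (\<psi> x) = 1" using n complex_norm_square[of "\<psi> x"] by simp
  ultimately show ?thesis using n by (metis mult_left_cancel norm_zero zero_neq_one)
qed

lemma char_diff:
  assumes "additive_character \<psi>" shows "\<psi> (x - y) = \<psi> x * cnj (\<psi> y)"
  using assms char_neg[OF assms, of y] unfolding additive_character_def
  by (metis diff_conv_add_uminus)

lemma char_orth:
  fixes \<psi> :: "'a::{finite,field} \<Rightarrow> complex"
  assumes "additive_character \<psi>" "nontrivial_character \<psi>"
  shows "(\<Sum>a\<in>UNIV. \<psi> (a * t)) = (if t = 0 then of_nat (card (UNIV::'a::{finite,field} set)) else 0)"
proof (cases "t = 0")
  case True then show ?thesis by (simp add: char_0[OF assms(1)])
next
  case False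
  obtain u where u: "\<psi> u \<noteq> 1" using assms(2) unfolding nontrivial_character_def by blast
  have "(\<Sum>a\<in>UNIV. \<psi> (a * t)) = (\<Sum>a\<in>UNIV. \<psi> ((a + u / t) * t))"
    by (rule sum.reindex_bij_witness[of _ "\<lambda>a. a + u/t" "\<lambda>a. a - u/t"]) auto
  also have "\<dots> = (\<Sum>a\<in>UNIV. \<psi> u * \<psi> (a * t))"
  proof (rule sum.cong)
    fix a have "(a + u / t) * t = u + a * t" using False by (simp add: field_simps)
    then show "\<psi> ((a + u / t) * t) = \<psi> u * \<psi> (a * t)"
      using assms(1) unfolding additive_character_def by simp
  qed simp
  also have "\<dots> = \<psi> u * (\<Sum>a\<in>UNIV. \<psi> (a * t))" by (simp add: sum_distrib_left)
  finally have "(1 - \<psi> u) * (\<Sum>a\<in>UNIV. \<psi> (a * t)) = 0" by (simp add: algebra_simps)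
  with u False show ?thesis by simp
qed

definition ind :: "bool \<Rightarrow> real" where "ind P = (if P then 1 else 0)"

lemma energy_sum:
  "real (add_energy U) = (\<Sum>u1\<in>U. \<Sum>u2\<in>U. \<Sum>u3\<in>U. \<Sum>u4\<in>U. ind (u1+u2=u3+u4))"
proof -
  have fin: "finite (U \<times> U \<times> U \<times> U)" by simp
  have "{(u1,u2,u3,u4). u1 \<in> U \<and> u2 \<in> U \<and> u3 \<in> U \<and> u4 \<in> U \<and> u1 + u2 = u3 + u4}
      = {x\<in>U \<times> U \<times> U \<times> U. (\<lambda>(u1,u2,u3,u4). u1 + u2 = u3 + u4) x}" by auto
  hence "real (add_energy U) = (\<Sum>x\<in>{x\<in>U \<times> U \<times> U \<times> U. (\<lambda>(u1,u2,u3,u4). u1 + u2 = u3 + u4) x}. 1)"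
    unfolding add_energy_def by simp
  also have "\<dots> = (\<Sum>x\<in>U \<times> U \<times> U \<times> U. (\<lambda>(u1,u2,u3,u4). ind (u1 + u2 = u3 + u4)) x)"
    unfolding ind_def by (subst sum.inter_filter[OF fin]) (simp add: case_prod_beta)
  also have "\<dots> = (\<Sum>u1\<in>U. \<Sum>u2\<in>U. \<Sum>u3\<in>U. \<Sum>u4\<in>U. ind (u1+u2=u3+u4))"
    by (simp add: sum.cartesian_product)
  finally show ?thesis .
qed

lemma reorder4:
  "(\<Sum>x\<in>X. \<Sum>y\<in>Y. \<Sum>z\<in>Z. \<Sum>w\<in>W. f x y z w) = (\<Sum>x\<in>X. \<Sum>w\<in>W. \<Sum>y\<in>Y. \<Sum>z\<in>Z. f x y z w)"
proof -
  have "(\<Sum>x\<in>X. \<Sum>y\<in>Y. \<Sum>z\<in>Z. \<Sum>w\<in>W. f x y z w) = (\<Sum>x\<in>X. \<Sum>y\<in>Y. \<Sum>w\<in>W. \<Sum>z\<in>Z. f x y z w)"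
    by (intro sum.cong refl) (rule sum.swap)
  also have "\<dots> = (\<Sum>x\<in>X. \<Sum>w\<in>W. \<Sum>y\<in>Y. \<Sum>z\<in>Z. f x y z w)"
    by (intro sum.cong refl) (rule sum.swap)
  finally show ?thesis .
qed

definition Dc :: "'a::{finite,field} set \<Rightarrow> 'a \<Rightarrow> real" where
  "Dc U d = (\<Sum>x\<in>U. \<Sum>y\<in>U. ind (x - y = d))"

lemma ind_delta: fixes a b :: "'a::finite" shows "(\<Sum>d\<in>UNIV. ind (a = d) * ind (b = d)) = ind (a = b)"
proof -
  have "(\<Sum>d\<in>UNIV. ind (a = d) * ind (b = d)) = (\<Sum>d\<in>UNIV. if a = d then ind (b = d) else 0)"
    by (intro sum.cong refl) (simp add: ind_def)
  also have "\<dots> = ind (b = a)" by (simp add: sum.delta)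
  finally show ?thesis by (simp add: eq_commute)
qed

lemma prod_D:
  fixes U V :: "'a::{finite,field} set"
  shows "(\<Sum>d\<in>UNIV. Dc U d * Dc V d) = (\<Sum>x\<in>U. \<Sum>y\<in>U. \<Sum>z\<in>V. \<Sum>w\<in>V. ind (x - y = z - w))"
proof -
  have "(\<Sum>d\<in>UNIV. Dc U d * Dc V d) = (\<Sum>d\<in>UNIV. \<Sum>x\<in>U. \<Sum>y\<in>U. \<Sum>z\<in>V. \<Sum>w\<in>V. ind (x - y = d) * ind (z - w = d))"
    by (intro sum.cong refl) (simp only: Dc_def[of U] sum_distrib_right, simp only: Dc_def sum_distrib_left)
  also have "\<dots> = (\<Sum>x\<in>U. \<Sum>d\<in>UNIV. \<Sum>y\<in>U. \<Sum>z\<in>V. \<Sum>w\<in>V. ind (x - y = d) * ind (z - w = d))"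
    by (rule sum.swap)
  also have "\<dots> = (\<Sum>x\<in>U. \<Sum>y\<in>U. \<Sum>d\<in>UNIV. \<Sum>z\<in>V. \<Sum>w\<in>V. ind (x - y = d) * ind (z - w = d))"
    by (rule sum.cong[OF refl]) (rule sum.swap)
  also have "\<dots> = (\<Sum>x\<in>U. \<Sum>y\<in>U. \<Sum>z\<in>V. \<Sum>d\<in>UNIV. \<Sum>w\<in>V. ind (x - y = d) * ind (z - w = d))"
    by (rule sum.cong[OF refl], rule sum.cong[OF refl]) (rule sum.swap)
  also have "\<dots> = (\<Sum>x\<in>U. \<Sum>y\<in>U. \<Sum>z\<in>V. \<Sum>w\<in>V. \<Sum>d\<in>UNIV. ind (x - y = d) * ind (z - w = d))"
    by (rule sum.cong[OF refl], rule sum.cong[OF refl], rule sum.cong[OF refl]) (rule sum.swap)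
  also have "\<dots> = (\<Sum>x\<in>U. \<Sum>y\<in>U. \<Sum>z\<in>V. \<Sum>w\<in>V. ind (x - y = z - w))"
    by (simp only: ind_delta)
  finally show ?thesis .
qed

lemma N_bound:
  fixes B C :: "'a::{finite,field} set"
  defines "N \<equiv> (\<Sum>b\<in>B. \<Sum>c\<in>C. \<Sum>b'\<in>B. \<Sum>c'\<in>C. ind (b + c = b' + c'))"
  shows "N\<^sup>2 \<le> real (add_energy B) * real (add_energy C)"
proof -
  have eq: "(x - y = z - w) = (x + w = y + z)" for x y z w :: 'a
    by (metis add.commute add_diff_eq diff_add_eq eq_diff_eq)
  have N: "N = (\<Sum>d\<in>UNIV. Dc B d * Dc C d)"
    unfolding prod_D N_def eq by (rule reorder4[symmetric])
  have E: "real (add_energy U) = (\<Sum>d\<in>UNIV. (Dc U d)\<^sup>2)" for U :: "'a set"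
    unfolding power2_eq_square prod_D energy_sum eq by (rule reorder4[symmetric])
  show ?thesis unfolding N E by (rule Cauchy_Schwarz_ineq_sum)
qed

lemma norm_sum4:
  fixes f :: "_ \<Rightarrow> _ \<Rightarrow> _ \<Rightarrow> _ \<Rightarrow> 'b::real_normed_vector"
  shows "norm (\<Sum>x\<in>X. \<Sum>y\<in>Y. \<Sum>z\<in>Z. \<Sum>w\<in>W. f x y z w) \<le> (\<Sum>x\<in>X. \<Sum>y\<in>Y. \<Sum>z\<in>Z. \<Sum>w\<in>W. norm (f x y z w))"
  by (rule order_trans[OF norm_sum], intro sum_mono, rule order_trans[OF norm_sum],
      intro sum_mono, rule order_trans[OF norm_sum], intro sum_mono, rule norm_sum)

lemma powr_quarter: "0 \<le> (x::real) \<Longrightarrow> x powr (1/4) = sqrt (sqrt x)"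
proof -
  assume x: "0 \<le> x"
  have "x powr (1/4) = (x powr (1/2)) powr (1/2)" by (simp add: powr_powr)
  also have "\<dots> = sqrt (sqrt x)" using x by (simp add: powr_half_sqrt)
  finally show ?thesis .
qed

lemma swap_in4:
  "(\<Sum>a\<in>U. \<Sum>x\<in>X. \<Sum>y\<in>Y. \<Sum>z\<in>Z. \<Sum>w\<in>W. f a x y z w) = (\<Sum>x\<in>X. \<Sum>y\<in>Y. \<Sum>z\<in>Z. \<Sum>w\<in>W. \<Sum>a\<in>U. f a x y z w)"
proof -
  have "(\<Sum>a\<in>U. \<Sum>x\<in>X. \<Sum>y\<in>Y. \<Sum>z\<in>Z. \<Sum>w\<in>W. f a x y z w) = (\<Sum>x\<in>X. \<Sum>a\<in>U. \<Sum>y\<in>Y. \<Sum>z\<in>Z. \<Sum>w\<in>W. f a x y z w)"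
    by (rule sum.swap)
  also have "\<dots> = (\<Sum>x\<in>X. \<Sum>y\<in>Y. \<Sum>a\<in>U. \<Sum>z\<in>Z. \<Sum>w\<in>W. f a x y z w)"
    by (rule sum.cong[OF refl]) (rule sum.swap)
  also have "\<dots> = (\<Sum>x\<in>X. \<Sum>y\<in>Y. \<Sum>z\<in>Z. \<Sum>a\<in>U. \<Sum>w\<in>W. f a x y z w)"
    by (rule sum.cong[OF refl], rule sum.cong[OF refl]) (rule sum.swap)
  also have "\<dots> = (\<Sum>x\<in>X. \<Sum>y\<in>Y. \<Sum>z\<in>Z. \<Sum>w\<in>W. \<Sum>a\<in>U. f a x y z w)"
    by (rule sum.cong[OF refl], rule sum.cong[OF refl], rule sum.cong[OF refl]) (rule sum.swap)
  finally show ?thesis .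
qed

theorem lemma4p1:
  fixes \<psi> :: "'a::{finite,field} \<Rightarrow> complex"
    and A B C :: "'a set"
  assumes "additive_character \<psi>" and "nontrivial_character \<psi>"
  shows "norm (S_sum \<psi> A B C) \<le>
    sqrt (real (card A)) * real (add_energy B) powr (1/4) * real (add_energy C) powr (1/4)
      * sqrt (real (card (UNIV :: 'a set)))"
proof -
  have hom: "\<And>x y. \<psi> (x + y) = \<psi> x * \<psi> y" and n1: "\<And>x. norm (\<psi> x) = 1"
    using assms(1) unfolding additive_character_def by auto
  define q where "q = real (card (UNIV :: 'a set))"
  define T where "T a = (\<Sum>b\<in>B. \<Sum>c\<in>C. \<psi> ((a+b)*(a+c)))" for a
  define N where "N = (\<Sum>b\<in>B. \<Sum>c\<in>C. \<Sum>b'\<in>B. \<Sum>c'\<in>C. ind (b + c = b' + c'))"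
  have S: "S_sum \<psi> A B C = (\<Sum>a\<in>A. \<psi> (-(a*a)) * T a)"
    unfolding S_sum_def T_def sum_distrib_left
  proof (intro sum.cong refl)
    fix a b c :: 'a
    have "a*b + a*c + b*c = -(a*a) + (a+b)*(a+c)" by (simp add: algebra_simps)
    then show "\<psi> (a * b + a * c + b * c) = \<psi> (- (a * a)) * \<psi> ((a + b) * (a + c))"
      by (simp only: hom)
  qed
  define X where "X = (\<Sum>a\<in>A. norm (T a))"
  have X0: "X \<ge> 0" unfolding X_def by (simp add: sum_nonneg)
  have SX: "norm (S_sum \<psi> A B C) \<le> X"
    unfolding S X_def by (rule order_trans[OF norm_sum]) (simp add: norm_mult n1)
  have X2: "X\<^sup>2 \<le> (\<Sum>a\<in>A. (norm (T a))\<^sup>2) * real (card A)"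
    unfolding X_def by (rule sum_squared_le_sum_of_squares)
  have AU: "(\<Sum>a\<in>A. (norm (T a))\<^sup>2) \<le> (\<Sum>a\<in>UNIV. (norm (T a))\<^sup>2)"
    by (rule sum_mono2) auto
  have TT: "T a * cnj (T a) = (\<Sum>b\<in>B. \<Sum>c\<in>C. \<Sum>b'\<in>B. \<Sum>c'\<in>C. \<psi> (a*(b+c-b'-c')) * \<psi> (b*c - b'*c'))" for a
  proof -
    have "T a * cnj (T a) = (\<Sum>b\<in>B. \<Sum>c\<in>C. \<Sum>b'\<in>B. \<Sum>c'\<in>C. \<psi> ((a+b)*(a+c)) * cnj (\<psi> ((a+b')*(a+c'))))"
      unfolding T_def cnj_sum by (simp only: sum_distrib_right, simp only: sum_distrib_left)
    also have "\<dots> = (\<Sum>b\<in>B. \<Sum>c\<in>C. \<Sum>b'\<in>B. \<Sum>c'\<in>C. \<psi> (a*(b+c-b'-c')) * \<psi> (b*c - b'*c'))"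
    proof (intro sum.cong refl)
      fix b c b' c' :: 'a
      have e: "(a+b)*(a+c) - (a+b')*(a+c') = a*(b+c-b'-c') + (b*c - b'*c')" by (simp add: algebra_simps)
      have "\<psi> ((a+b)*(a+c)) * cnj (\<psi> ((a+b')*(a+c'))) = \<psi> ((a+b)*(a+c) - (a+b')*(a+c'))"
        by (rule char_diff[OF assms(1), symmetric])
      also have "\<dots> = \<psi> (a*(b+c-b'-c')) * \<psi> (b*c - b'*c')" unfolding e by (rule hom)
      finally show "\<psi> ((a+b)*(a+c)) * cnj (\<psi> ((a+b')*(a+c'))) = \<psi> (a*(b+c-b'-c')) * \<psi> (b*c - b'*c')" .
    qed
    finally show ?thesis .
  qed
  define R where "R = (\<Sum>a\<in>UNIV. (norm (T a))\<^sup>2)"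
  have R0: "R \<ge> 0" unfolding R_def by (simp add: sum_nonneg)
  have "complex_of_real R = (\<Sum>a\<in>UNIV. T a * cnj (T a))"
    unfolding R_def of_real_sum complex_norm_square ..
  also have "\<dots> = (\<Sum>a\<in>UNIV. \<Sum>b\<in>B. \<Sum>c\<in>C. \<Sum>b'\<in>B. \<Sum>c'\<in>C. \<psi> (a*(b+c-b'-c')) * \<psi> (b*c - b'*c'))"
    by (simp only: TT)
  also have "\<dots> = (\<Sum>b\<in>B. \<Sum>c\<in>C. \<Sum>b'\<in>B. \<Sum>c'\<in>C. \<Sum>a\<in>UNIV. \<psi> (a*(b+c-b'-c')) * \<psi> (b*c - b'*c'))"
    by (rule swap_in4)
  also have "\<dots> = (\<Sum>b\<in>B. \<Sum>c\<in>C. \<Sum>b'\<in>B. \<Sum>c'\<in>C. (\<Sum>a\<in>UNIV. \<psi> (a*(b+c-b'-c'))) * \<psi> (b*c - b'*c'))"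
    by (simp only: sum_distrib_right)
  also have "\<dots> = (\<Sum>b\<in>B. \<Sum>c\<in>C. \<Sum>b'\<in>B. \<Sum>c'\<in>C. (if b+c-b'-c' = 0 then of_nat (card (UNIV::'a set)) else 0) * \<psi> (b*c - b'*c'))"
    by (simp only: char_orth[OF assms])
  finally have Req: "complex_of_real R = \<dots>" .
  have "R = norm (complex_of_real R)" using R0 by simp
  also have "\<dots> \<le> (\<Sum>b\<in>B. \<Sum>c\<in>C. \<Sum>b'\<in>B. \<Sum>c'\<in>C. norm ((if b+c-b'-c' = 0 then of_nat (card (UNIV::'a set)) else 0) * \<psi> (b*c - b'*c')))"
    unfolding Req by (rule norm_sum4)
  also have "\<dots> = (\<Sum>b\<in>B. \<Sum>c\<in>C. \<Sum>b'\<in>B. \<Sum>c'\<in>C. q * ind (b + c = b' + c'))"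
  proof (intro sum.cong refl)
    fix b c b' c' :: 'a
    have z: "(b+c-b'-c' = 0) = (b + c = b' + c')" unfolding diff_diff_eq by (rule eq_iff_diff_eq_0[symmetric])
    show "norm ((if b+c-b'-c' = 0 then of_nat (card (UNIV::'a set)) else 0) * \<psi> (b*c - b'*c')) = q * ind (b + c = b' + c')"
      unfolding z by (simp add: norm_mult n1 ind_def q_def)
  qed
  also have "\<dots> = q * N" unfolding N_def by (simp only: sum_distrib_left)
  finally have UN: "(\<Sum>a\<in>UNIV. (norm (T a))\<^sup>2) \<le> q * N" unfolding R_def .
  have NB: "N\<^sup>2 \<le> real (add_energy B) * real (add_energy C)"
    unfolding N_def by (rule N_bound)
  have N0: "N \<ge> 0" unfolding N_def by (simp add: sum_nonneg ind_def)
  have q0: "q \<ge> 0" unfolding q_def by simp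
  have "X\<^sup>2 \<le> real (card A) * q * N"
  proof -
    have "(\<Sum>a\<in>A. (norm (T a))\<^sup>2) * real (card A) \<le> (q * N) * real (card A)"
      using AU UN by (intro mult_right_mono) auto
    then show ?thesis using X2 by (simp add: algebra_simps)
  qed
  also have "\<dots> \<le> real (card A) * q * sqrt (real (add_energy B) * real (add_energy C))"
    using NB q0 by (intro mult_left_mono real_le_rsqrt) auto
  finally have "X \<le> sqrt (real (card A) * q * sqrt (real (add_energy B) * real (add_energy C)))"
    by (rule real_le_rsqrt)
  also have "\<dots> = sqrt (real (card A)) * real (add_energy B) powr (1/4) * real (add_energy C) powr (1/4) * sqrt q"
    by (simp add: powr_quarter real_sqrt_mult)
  finally show ?thesis using SX unfolding q_def by linarith
qed

end
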